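(* Let $\mathbf{S}$ be $\mathbf{G3CoPC}$ or $\mathbf{G3MPC}$, let $p$ be a propositional variable and let $n\ge 1$ be a natural number. Then both sequents $\Rightarrow \neg^{(2n+1)}p\to\neg p$ and $\Rightarrow \neg^{(2n)}p\leftrightarrow\neg\neg p$ are derivable in $\mathbf{S}$, where $\neg^{(m)}$ denotes $m$ nested applications of $\neg$.
   Context: Formulas are generated from a countable set of propositional variables $p,q,\dots$ and the constant $\top$ by the grammar $\varphi::= p\mid\top\mid\varphi\wedge\varphi\mid\varphi\vee\varphi\mid\varphi\to\varphi\mid\neg\varphi$ (there is no constant $\bot$). $\varphi\leftrightarrow\psi$ abbreviates $(\varphi\to\psi)\wedge(\psi\to\varphi)$. A sequent is an expression $\Gamma\Rightarrow\varphi$ where $\Gamma$ is a finite multiset of formulas and $\varphi$ is a formula (the goal); $\Gamma,\Delta$ denotes multiset union and $\Gamma,\alpha$ denotes $\Gamma$ with one more occurrence of $\alpha$. Rules ($p$ a propositional variable): (ax) $\Gamma,p\Rightarrow p$ (no premises); ($\top$) $\Gamma\Rightarrow\top$ (no premises); ($\to$r) from $\Gamma,\alpha\Rightarrow\beta$ infer $\Gamma\Rightarrow\alpha\to\beta$; ($\to$l) from $\Gamma,\alpha\to\beta\Rightarrow\alpha$ and $\Gamma,\beta\Rightarrow\varphi$ infer $\Gamma,\alpha\to\beta\Rightarrow\varphi$; ($\wedge$r) from $\Gamma\Rightarrow\alpha$ and $\Gamma\Rightarrow\beta$ infer $\Gamma\Rightarrow\alpha\wedge\beta$; ($\wedge$l)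 from $\Gamma,\alpha,\beta\Rightarrow\varphi$ infer $\Gamma,\alpha\wedge\beta\Rightarrow\varphi$; ($\vee$r$_1$), ($\vee$r$_2$) from $\Gamma\Rightarrow\alpha$ (resp. $\Gamma\Rightarrow\beta$) infer $\Gamma\Rightarrow\alpha\vee\beta$; ($\vee$l) from $\Gamma,\alpha\Rightarrow\varphi$ and $\Gamma,\beta\Rightarrow\varphi$ infer $\Gamma,\alpha\vee\beta\Rightarrow\varphi$; (n) from $\Gamma,\neg\alpha,\beta\Rightarrow\alpha$ and $\Gamma,\neg\alpha,\alpha\Rightarrow\beta$ infer $\Gamma,\neg\alpha\Rightarrow\neg\beta$; (nef) from $\Gamma,\neg\alpha\Rightarrow\alpha$ infer $\Gamma,\neg\alpha\Rightarrow\neg\beta$; (copc) from $\Gamma,\neg\alpha,\beta\Rightarrow\alpha$ infer $\Gamma,\neg\alpha\Rightarrow\neg\beta$; (an) from $\Gamma,\alpha\Rightarrow\neg\alpha$ infer $\Gamma\Rightarrow\neg\alpha$. The rules (ax) through ($\vee$l) are the positive rules. The four systems are: $\mathbf{G3N}$ = positive rules + (n); $\mathbf{G3NeF}$ = positive rules + (n) + (nef); $\mathbf{G3CoPC}$ = positive rules + (copc); $\mathbf{G3MPC}$ = positive rules + (copc) + (an). None of them contains weakening, contraction or cut as a rule. A derivation is a finite tree of rule instances with leaves instances of (ax) or ($\top$); its height is the number of inference steps on a longest branch. A sequent is derivable if it has a derivation; a formula $\varphi$ is a theorem if $\Rightarrow\varphi$ (empty antecedent) is derivable. *)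

theory Defs
  imports Main "HOL-Library.Multiset"
begin

datatype fm = Var nat | Top | Conj fm fm | Disj fm fm | Imp fm fm | Neg fm

definition Iff :: "fm \<Rightarrow> fm \<Rightarrow> fm" where
  "Iff a b = Conj (Imp a b) (Imp b a)"

fun negs :: "nat \<Rightarrow> fm \<Rightarrow> fm" where
  "negs 0 a = a"
| "negs (Suc m) a = Neg (negs m a)"

datatype system = G3N | G3NeF | G3CoPC | G3MPC

definition has_n :: "system \<Rightarrow> bool" where
  "has_n S \<longleftrightarrow> S = G3N \<or> S = G3NeF"
definition has_nef :: "system \<Rightarrow> bool" where
  "has_nef S \<longleftrightarrow> S = G3NeF"
definition has_copc :: "system \<Rightarrow> bool" where
  "has_copc S \<longleftrightarrow> S = G3CoPC \<or> S = G3MPC"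
definition has_an :: "system \<Rightarrow> bool" where
  "has_an S \<longleftrightarrow> S = G3MPC"

inductive derivable :: "system \<Rightarrow> fm multiset \<Rightarrow> fm \<Rightarrow> bool" for S where
  ax: "derivable S (add_mset (Var p) \<Gamma>) (Var p)"
| top: "derivable S \<Gamma> Top"
| impR: "derivable S (add_mset a \<Gamma>) b \<Longrightarrow> derivable S \<Gamma> (Imp a b)"
| impL: "derivable S (add_mset (Imp a b) \<Gamma>) a \<Longrightarrow> derivable S (add_mset b \<Gamma>) \<phi>
          \<Longrightarrow> derivable S (add_mset (Imp a b) \<Gamma>) \<phi>"
| conjR: "derivable S \<Gamma> a \<Longrightarrow> derivable S \<Gamma> b \<Longrightarrow> derivable S \<Gamma> (Conj a b)"
| conjL: "derivable S (add_mset a (add_mset b \<Gamma>)) \<phi> \<Longrightarrow> derivable S (add_mset (Conj a b) \<Gamma>) \<phi>"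
| disjR1: "derivable S \<Gamma> a \<Longrightarrow> derivable S \<Gamma> (Disj a b)"
| disjR2: "derivable S \<Gamma> b \<Longrightarrow> derivable S \<Gamma> (Disj a b)"
| disjL: "derivable S (add_mset a \<Gamma>) \<phi> \<Longrightarrow> derivable S (add_mset b \<Gamma>) \<phi>
          \<Longrightarrow> derivable S (add_mset (Disj a b) \<Gamma>) \<phi>"
| n: "has_n S \<Longrightarrow> derivable S (add_mset (Neg a) (add_mset b \<Gamma>)) a
       \<Longrightarrow> derivable S (add_mset (Neg a) (add_mset a \<Gamma>)) b
       \<Longrightarrow> derivable S (add_mset (Neg a) \<Gamma>) (Neg b)"
| nef: "has_nef S \<Longrightarrow> derivable S (add_mset (Neg a) \<Gamma>) a
       \<Longrightarrow> derivable S (add_mset (Neg a) \<Gamma>) (Neg b)"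
| copc: "has_copc S \<Longrightarrow> derivable S (add_mset (Neg a) (add_mset b \<Gamma>)) a
       \<Longrightarrow> derivable S (add_mset (Neg a) \<Gamma>) (Neg b)"
| an: "has_an S \<Longrightarrow> derivable S (add_mset a \<Gamma>) (Neg a)
       \<Longrightarrow> derivable S \<Gamma> (Neg a)"

end

theory Submission
  imports Defs
begin

lemma negs_comp: "negs a (negs b x) = negs (a+b) x"
  by (induction a) auto

lemma idn: "has_copc S \<Longrightarrow> derivable S (add_mset (negs k (Var p)) \<Gamma>) (negs k (Var p))"
proof (induction k arbitrary: \<Gamma>)
  case 0 then show ?case by (simp add: derivable.ax)
next
  case (Suc k)
  have "derivable S (add_mset (negs k (Var p)) (add_mset (Neg (negs k (Var p))) \<Gamma>)) (negs k (Var p))"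
    using Suc by blast
  then have "derivable S (add_mset (Neg (negs k (Var p))) (add_mset (negs k (Var p)) \<Gamma>)) (negs k (Var p))"
    by (simp add: add_mset_commute)
  then show ?case using derivable.copc[OF Suc.prems] by simp
qed

lemma GF:
  assumes c: "has_copc S" and idx: "\<And>\<Gamma>. derivable S (add_mset x \<Gamma>) x"
  shows "(\<forall>\<Gamma>. x \<in># \<Gamma> \<longrightarrow> negs (Suc (2*m)) x \<in># \<Gamma> \<longrightarrow> derivable S \<Gamma> (negs (2*m) x))
       \<and> (\<forall>\<Gamma>. x \<in># \<Gamma> \<longrightarrow> negs (Suc (2*m)) x \<in># \<Gamma> \<longrightarrow> derivable S \<Gamma> (negs (Suc (Suc (2*m))) x))"
proof (induction m)
  case 0
  have G: "\<forall>\<Gamma>. x \<in># \<Gamma> \<longrightarrow> negs (Suc (2*0)) x \<in># \<Gamma> \<longrightarrow> derivable S \<Gamma> (negs (2*0) x)"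
  proof (intro allI impI)
    fix \<Gamma> assume "x \<in># \<Gamma>"
    then obtain \<Gamma>0 where "\<Gamma> = add_mset x \<Gamma>0" by (metis mset_add)
    then show "derivable S \<Gamma> (negs (2*0) x)" using idx by simp
  qed
  have F: "\<forall>\<Gamma>. x \<in># \<Gamma> \<longrightarrow> negs (Suc (2*0)) x \<in># \<Gamma> \<longrightarrow> derivable S \<Gamma> (negs (Suc (Suc (2*0))) x)"
  proof (intro allI impI)
    fix \<Gamma> assume h1: "x \<in># \<Gamma>" and h2: "negs (Suc (2*0)) x \<in># \<Gamma>"
    then obtain \<Gamma>0 where g: "\<Gamma> = add_mset (Neg x) \<Gamma>0" by (metis mset_add negs.simps mult_0_right negs.simps(1))
    have "x \<in># add_mset (Neg x) (add_mset (Neg x) \<Gamma>0)" using h1 g by auto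
    then have "derivable S (add_mset (Neg x) (add_mset (Neg x) \<Gamma>0)) x" using G by auto
    then show "derivable S \<Gamma> (negs (Suc (Suc (2*0))) x)" using derivable.copc[OF c] g by simp
  qed
  show ?case using G F by blast
next
  case (Suc m)
  have G: "\<forall>\<Gamma>. x \<in># \<Gamma> \<longrightarrow> negs (Suc (2*Suc m)) x \<in># \<Gamma> \<longrightarrow> derivable S \<Gamma> (negs (2*Suc m) x)"
  proof (intro allI impI)
    fix \<Gamma> assume h1: "x \<in># \<Gamma>" and h2: "negs (Suc (2*Suc m)) x \<in># \<Gamma>"
    have e: "negs (Suc (2*Suc m)) x = Neg (negs (Suc (Suc (2*m))) x)" by simp
    obtain \<Gamma>0 where g: "\<Gamma> = add_mset (Neg (negs (Suc (Suc (2*m))) x)) \<Gamma>0"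
      using h2 e by (metis mset_add)
    let ?M = "add_mset (Neg (negs (Suc (Suc (2*m))) x)) (add_mset (negs (Suc (2*m)) x) \<Gamma>0)"
    have "x \<in># ?M" "negs (Suc (2*m)) x \<in># ?M" using h1 g by auto
    then have "derivable S ?M (negs (Suc (Suc (2*m))) x)" using Suc.IH by blast
    then show "derivable S \<Gamma> (negs (2*Suc m) x)" using derivable.copc[OF c] g by simp
  qed
  have F: "\<forall>\<Gamma>. x \<in># \<Gamma> \<longrightarrow> negs (Suc (2*Suc m)) x \<in># \<Gamma> \<longrightarrow> derivable S \<Gamma> (negs (Suc (Suc (2*Suc m))) x)"
  proof (intro allI impI)
    fix \<Gamma> assume h1: "x \<in># \<Gamma>" and h2: "negs (Suc (2*Suc m)) x \<in># \<Gamma>"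
    have e: "negs (Suc (2*Suc m)) x = Neg (negs (2*Suc m) x)" by simp
    obtain \<Gamma>0 where g: "\<Gamma> = add_mset (Neg (negs (2*Suc m) x)) \<Gamma>0"
      using h2 e by (metis mset_add)
    let ?M = "add_mset (Neg (negs (2*Suc m) x)) (add_mset (negs (Suc (2*Suc m)) x) \<Gamma>0)"
    have "x \<in># ?M" "negs (Suc (2*Suc m)) x \<in># ?M" using h1 g by auto
    then have "derivable S ?M (negs (2*Suc m) x)" using G by blast
    then show "derivable S \<Gamma> (negs (Suc (Suc (2*Suc m))) x)" using derivable.copc[OF c] g by simp
  qed
  show ?case using G F by blast
qed

lemma Gp: "has_copc S \<Longrightarrow> x = negs j (Var p) \<Longrightarrow> x \<in># \<Gamma> \<Longrightarrow> negs (Suc (2*m)) x \<in># \<Gamma>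
   \<Longrightarrow> derivable S \<Gamma> (negs (2*m) x)"
  using GF[of S x m] idn by blast

theorem proposition4p2:
  fixes S :: system and p :: nat and n :: nat
  assumes "S = G3CoPC \<or> S = G3MPC"
    and "n \<ge> 1"
  shows "derivable S {#} (Imp (negs (2*n+1) (Var p)) (Neg (Var p)))
       \<and> derivable S {#} (Iff (negs (2*n) (Var p)) (Neg (Neg (Var p))))"
proof -
  have c: "has_copc S" using assms(1) by (auto simp: has_copc_def)
  obtain k where n: "n = Suc k" using assms(2) by (cases n) auto
  let ?N = "\<lambda>j. negs j (Var p)"
  have "derivable S {# Neg (?N (2*n)), Var p #} (?N (2*n))"
    by (rule Gp[OF c, of "Var p" 0]) auto
  then have "derivable S (add_mset (Neg (?N (2*n))) {#}) (Neg (Var p))"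
    using derivable.copc[OF c, of "?N (2*n)" "Var p" "{#}"] by simp
  then have P1: "derivable S {#} (Imp (negs (2*n+1) (Var p)) (Neg (Var p)))"
    by (intro derivable.impR) simp
  have e1: "?N (2*n) = negs (Suc (2*k)) (negs 1 (Var p))" using n negs_comp[of "Suc (2*k)" 1 "Var p"] by simp
  have e2: "?N (2*n - 1) = negs (2*k) (negs 1 (Var p))" using n negs_comp[of "2*k" 1 "Var p"] by simp
  have "derivable S {# ?N (2*n), Neg (Var p) #} (negs (2*k) (negs 1 (Var p)))"
    by (rule Gp[OF c, of _ 1]) (auto simp: e1)
  then have "derivable S (add_mset (Neg (?N (2*n-1))) (add_mset (Neg (Var p)) {#})) (?N (2*n-1))"
    using n e2 by simp
  then have "derivable S (add_mset (Neg (?N (2*n-1))) {#}) (Neg (Neg (Var p)))"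
    using derivable.copc[OF c] by blast
  then have P2a: "derivable S {#} (Imp (?N (2*n)) (Neg (Neg (Var p))))"
    using n by (intro derivable.impR) simp
  have "derivable S {# Var p, ?N (2*n - 1), Neg (Neg (Var p)) #} (?N (2*k))"
    by (rule Gp[OF c, of "Var p" 0]) (auto simp: n)
  then have "derivable S (add_mset (Neg (?N (2*k))) (add_mset (Var p) {# Neg (Neg (Var p)) #})) (?N (2*k))"
    using n by (simp add: add_mset_commute)
  then have "derivable S (add_mset (Neg (?N (2*k))) {# Neg (Neg (Var p)) #}) (Neg (Var p))"
    using derivable.copc[OF c] by blast
  then have "derivable S (add_mset (Neg (Neg (Var p))) (add_mset (?N (2*n-1)) {#})) (Neg (Var p))"
    using n by (simp add: add_mset_commute)
  then have "derivable S (add_mset (Neg (Neg (Var p))) {#}) (Neg (?N (2*n-1)))"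
    using derivable.copc[OF c] by blast
  then have P2b: "derivable S {#} (Imp (Neg (Neg (Var p))) (?N (2*n)))"
    using n by (intro derivable.impR) simp
  show ?thesis using P1 P2a P2b by (simp add: Iff_def derivable.conjR)
qed

end
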